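(* Under the setting below, let $X$ be such that $k^*(X)=\arg\max_{k\in K}p_\theta(k\mid X)$ is unique. Then for every translation $\mathbf g\in\mathbb{Z}^3$, $k^*(T_{\mathbf g}X)$ is unique and equals $\pi_{\mathbf g}(k^*(X))$, and $$\mathrm{APT}(T_{\mathbf g}X)=T_{\mathbf g'}\,\mathrm{APT}(X),\qquad \mathbf g'=\Big\lfloor \tfrac{k^*(X)+\mathbf g}{\mathbf s}\Big\rfloor$$ (floor and division componentwise), where $T_{\mathbf g'}$ is a circular translation of the coarse grid.
   Context: Volumes $X:\mathbb{Z}_D\times\mathbb{Z}_H\times\mathbb{Z}_W\to\mathbb{R}^C$ with periodic boundary conditions; patch size $\mathbf s=(s_D,s_H,s_W)$ with $s_D\mid D$, $s_H\mid H$, $s_W\mid W$. Translation: $(T_{\mathbf g}Y)(x)=Y(x-\mathbf g)$, indices modulo the grid size. Phase index set $K=\{0,\dots,s_D-1\}\times\{0,\dots,s_H-1\}\times\{0,\dots,s_W-1\}$. Polyphase decomposition: for $k=(p,q,r)\in K$, $\Psi(X)_k(i,j,l)=X(i s_D+p,\;j s_H+q,\;l s_W+r)$ on the coarse grid $V=\mathbb{Z}_{D/s_D}\times\mathbb{Z}_{H/s_H}\times\mathbb{Z}_{W/s_W}$. $\tilde f_\theta$ maps volumes on $V$ to real-valued fields on $V$ and is translation-equivariant: $\tilde f_\theta(T_{\mathbf c}Y)=T_{\mathbf c}\tilde f_\theta(Y)$. Score $f_\theta(Y)=\frac1{|V|}\sum_{v\in V}\tilde f_\theta(Y)[v]$;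 selection probabilities $p_\theta(k\mid X)=\exp[f_\theta(\Psi(X)_k)]/\sum_{k'\in K}\exp[f_\theta(\Psi(X)_{k'})]$. Permutation $\pi_{\mathbf g}(k)=(k+\mathbf g)\bmod\mathbf s$ componentwise. Adaptive Phase Tokenization (deterministic/inference mode): $\mathrm{APT}(X)=\Psi(X)_{k^*(X)}$ with $k^*(X)=\arg\max_{k\in K}p_\theta(k\mid X)$. *)

theory Defs
  imports "HOL-Analysis.Analysis"
begin

text \<open>Points of the (fine or coarse) grid are represented by integer triples; a volume
on the periodic grid Z_D x Z_H x Z_W is represented by a function on Z^3 that is periodic
with periods (D,H,W).  Equality of such periodic functions is equality of volumes.\<close>

type_synonym idx3 = "int \<times> int \<times> int"
type_synonym 'a vol = "idx3 \<Rightarrow> 'a"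

definition periodic3 :: "idx3 \<Rightarrow> 'a vol \<Rightarrow> bool" where
  "periodic3 N Y \<longleftrightarrow> (case N of (a, b, c) \<Rightarrow>
     (\<forall>i j l. Y (i + a, j, l) = Y (i, j, l) \<and> Y (i, j + b, l) = Y (i, j, l)
             \<and> Y (i, j, l + c) = Y (i, j, l)))"

definition shift3 :: "idx3 \<Rightarrow> 'a vol \<Rightarrow> 'a vol" where
  "shift3 g Y = (\<lambda>(i, j, l). case g of (a, b, c) \<Rightarrow> Y (i - a, j - b, l - c))"

text \<open>Set of representatives {0..<a} x {0..<b} x {0..<c} (used for K and V).\<close>
definition grid3 :: "idx3 \<Rightarrow> idx3 set" where
  "grid3 N = (case N of (a, b, c) \<Rightarrow> {0..<a} \<times> {0..<b} \<times> {0..<c})"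

definition coarse3 :: "idx3 \<Rightarrow> idx3 \<Rightarrow> idx3" where
  "coarse3 N s = (case N of (a, b, c) \<Rightarrow> case s of (p, q, r) \<Rightarrow> (a div p, b div q, c div r))"

definition polyphase :: "idx3 \<Rightarrow> 'a vol \<Rightarrow> idx3 \<Rightarrow> 'a vol" where
  "polyphase s X k = (\<lambda>(i, j, l). case s of (sD, sH, sW) \<Rightarrow> case k of (p, q, r) \<Rightarrow>
      X (i * sD + p, j * sH + q, l * sW + r))"

definition score :: "('a vol \<Rightarrow> real vol) \<Rightarrow> idx3 \<Rightarrow> 'a vol \<Rightarrow> real" where
  "score ft V Y = (\<Sum>v\<in>grid3 V. ft Y v) / real (card (grid3 V))"

definition selprob :: "('a vol \<Rightarrow> real vol) \<Rightarrow> idx3 \<Rightarrow> idx3 \<Rightarrow> 'a vol \<Rightarrow> idx3 \<Rightarrow> real" where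
  "selprob ft N s X k =
     exp (score ft (coarse3 N s) (polyphase s X k)) /
     (\<Sum>k'\<in>grid3 s. exp (score ft (coarse3 N s) (polyphase s X k')))"

definition is_argmax_phase :: "('a vol \<Rightarrow> real vol) \<Rightarrow> idx3 \<Rightarrow> idx3 \<Rightarrow> 'a vol \<Rightarrow> idx3 \<Rightarrow> bool" where
  "is_argmax_phase ft N s X k \<longleftrightarrow>
     k \<in> grid3 s \<and> (\<forall>k'\<in>grid3 s. selprob ft N s X k' \<le> selprob ft N s X k)"

definition kstar :: "('a vol \<Rightarrow> real vol) \<Rightarrow> idx3 \<Rightarrow> idx3 \<Rightarrow> 'a vol \<Rightarrow> idx3" where
  "kstar ft N s X = (THE k. is_argmax_phase ft N s X k)"

definition APT :: "('a vol \<Rightarrow> real vol) \<Rightarrow> idx3 \<Rightarrow> idx3 \<Rightarrow> 'a vol \<Rightarrow> 'a vol" where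
  "APT ft N s X = polyphase s X (kstar ft N s X)"

definition perm3 :: "idx3 \<Rightarrow> idx3 \<Rightarrow> idx3 \<Rightarrow> idx3" where
  "perm3 s g k = (case s of (sD, sH, sW) \<Rightarrow> case g of (a, b, c) \<Rightarrow> case k of (p, q, r) \<Rightarrow>
     ((p + a) mod sD, (q + b) mod sH, (r + c) mod sW))"

text \<open>floor((k + g) / s) componentwise (int div is floor division).\<close>
definition floordiv3 :: "idx3 \<Rightarrow> idx3 \<Rightarrow> idx3 \<Rightarrow> idx3" where
  "floordiv3 s g k = (case s of (sD, sH, sW) \<Rightarrow> case g of (a, b, c) \<Rightarrow> case k of (p, q, r) \<Rightarrow>
     ((p + a) div sD, (q + b) div sH, (r + c) div sW))"

end

theory Submission
  imports Defs
begin

lemma per_plus_nat: assumes "\<forall>x. f (x + n) = (f x :: 'b)" shows "f (y + int k * n) = f y"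
proof (induction k)
  case (Suc k)
  have "y + int (Suc k) * n = (y + int k * n) + n" by (simp add: algebra_simps)
  moreover have "f ((y + int k * n) + n) = f (y + int k * n)" using assms by blast
  ultimately show ?case using Suc.IH by metis
qed simp

lemma per_mod: assumes "n > 0" "\<forall>x::int. f (x + n) = (f x :: 'b)" shows "f x = f (x mod n)"
proof (cases "x div n \<ge> 0")
  case True
  then obtain k where k: "x div n = int k" by (metis nonneg_int_cases)
  have "f (x mod n + int k * n) = f (x mod n)" by (rule per_plus_nat[OF assms(2)])
  moreover have "x mod n + int k * n = x" using k by (metis add.commute div_mult_mod_eq)
  ultimately show ?thesis by simp
next
  case False
  then obtain k where k: "- (x div n) = int k" by (metis neg_0_le_iff_le nle_le nonneg_int_cases)
  have "f (x + int k * n) = f x" by (rule per_plus_nat[OF assms(2)])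
  moreover have "x + int k * n = x mod n" using k
    by (metis add.commute add_diff_cancel_left' diff_add_cancel div_mult_mod_eq minus_mult_left uminus_add_conv_diff)
  ultimately show ?thesis by simp
qed

lemma sum_shift1: assumes "n > 0" "\<forall>x::int. f (x + n) = (f x :: real)"
  shows "(\<Sum>i\<in>{0..<n}. f (i - c)) = (\<Sum>i\<in>{0..<n}. f i)"
proof -
  have "(\<Sum>i\<in>{0..<n}. f (i - c)) = (\<Sum>i\<in>{0..<n}. f ((i - c) mod n))"
    by (intro sum.cong refl) (rule per_mod[OF assms])
  also have "\<dots> = (\<Sum>i\<in>{0..<n}. f i)"
  proof (rule sum.reindex_bij_betw)
    show "bij_betw (\<lambda>i. (i - c) mod n) {0..<n} {0..<n}"
    proof (rule bij_betw_byWitness[where f' = "\<lambda>y. (y + c) mod n"])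
      show "\<forall>a\<in>{0..<n}. ((a - c) mod n + c) mod n = a" by (auto simp: mod_simps)
      show "\<forall>a\<in>{0..<n}. ((a + c) mod n - c) mod n = a" by (auto simp: mod_simps)
      show "(\<lambda>i. (i - c) mod n) ` {0..<n} \<subseteq> {0..<n}" using assms(1) by auto
      show "(\<lambda>y. (y + c) mod n) ` {0..<n} \<subseteq> {0..<n}" using assms(1) by auto
    qed
  qed
  finally show ?thesis .
qed

lemma sum_shift3:
  assumes "a > 0" "b > 0" "c > 0" "periodic3 (a, b, c) F"
  shows "(\<Sum>v\<in>grid3 (a, b, c). shift3 t F v) = (\<Sum>v\<in>grid3 (a, b, c). (F v :: real))"
proof -
  obtain t1 t2 t3 where t: "t = (t1, t2, t3)" by (cases t) auto
  have P1: "\<And>i j l. F (i + a, j, l) = F (i, j, l)" and P2: "\<And>i j l. F (i, j + b, l) = F (i, j, l)"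
    and P3: "\<And>i j l. F (i, j, l + c) = F (i, j, l)" using assms(4) by (auto simp: periodic3_def)
  have "(\<Sum>v\<in>grid3 (a, b, c). shift3 t F v)
      = (\<Sum>i\<in>{0..<a}. \<Sum>j\<in>{0..<b}. \<Sum>l\<in>{0..<c}. F (i - t1, j - t2, l - t3))"
    by (simp add: grid3_def shift3_def t sum.cartesian_product)
  also have "\<dots> = (\<Sum>i\<in>{0..<a}. \<Sum>j\<in>{0..<b}. \<Sum>l\<in>{0..<c}. F (i - t1, j - t2, l))"
    by (intro sum.cong refl sum_shift1) (use assms P3 in auto)
  also have "\<dots> = (\<Sum>i\<in>{0..<a}. \<Sum>j\<in>{0..<b}. \<Sum>l\<in>{0..<c}. F (i - t1, j, l))"
    by (intro sum.cong refl sum_shift1[where f = "\<lambda>j. \<Sum>l\<in>{0..<c}. F (_, j, l)"]) (use assms P2 in auto)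
  also have "\<dots> = (\<Sum>i\<in>{0..<a}. \<Sum>j\<in>{0..<b}. \<Sum>l\<in>{0..<c}. F (i, j, l))"
    by (intro sum.cong refl sum_shift1[where f = "\<lambda>i. \<Sum>j\<in>{0..<b}. \<Sum>l\<in>{0..<c}. F (i, j, l)"]) (use assms P1 in auto)
  also have "\<dots> = (\<Sum>v\<in>grid3 (a, b, c). F v)"
    by (simp add: grid3_def sum.cartesian_product)
  finally show ?thesis .
qed

lemma mod_back: assumes "0 \<le> k" "k < (s::int)" shows "((k + a) mod s - a) div s = - ((k + a) div s)"
proof -
  have h: "(k + a) div s * s + (k + a) mod s = k + a" by (rule div_mult_mod_eq)
  have e: "(- ((k + a) div s)) * s = - ((k + a) div s * s)" by simp
  have 1: "(k + a) mod s - a = k + (- ((k + a) div s)) * s" using h e by linarith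
  have 2: "(k + (- ((k + a) div s)) * s) div s = - ((k + a) div s) + k div s"
    by (rule div_mult_self1) (use assms in simp)
  have 3: "k div s = 0" using assms by (rule div_pos_pos_trivial)
  show ?thesis using 1 2 3 by simp
qed

lemma mod_eq_iff: assumes "0 \<le> k0" "k0 < (s::int)"
  shows "(0 \<le> k \<and> k < s \<and> (k - a) mod s = k0) \<longleftrightarrow> k = (k0 + a) mod s"
proof
  assume h: "0 \<le> k \<and> k < s \<and> (k - a) mod s = k0"
  then have "k = k mod s" by simp
  also have "\<dots> = ((k - a) mod s + a) mod s" by (simp add: mod_simps)
  finally show "k = (k0 + a) mod s" using h by simp
next
  assume "k = (k0 + a) mod s"
  then show "0 \<le> k \<and> k < s \<and> (k - a) mod s = k0" using assms by (auto simp: mod_simps)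
qed


lemma polyphase_periodic:
  assumes "sD dvd D" "sH dvd H" "sW dvd W" "periodic3 (D, H, W) X"
  shows "periodic3 (coarse3 (D, H, W) (sD, sH, sW)) (polyphase (sD, sH, sW) X k)"
proof -
  obtain p q r where k: "k = (p, q, r)" by (cases k) auto
  have e1: "(D div sD) * sD = D" "(H div sH) * sH = H" "(W div sW) * sW = W"
    using assms(1-3) by simp_all
  have P: "\<And>i j l. X (i + D, j, l) = X (i, j, l)" "\<And>i j l. X (i, j + H, l) = X (i, j, l)"
    "\<And>i j l. X (i, j, l + W) = X (i, j, l)" using assms(4) by (auto simp: periodic3_def)
  have a: "(i + D div sD) * sD + p = (i * sD + p) + D" for i using e1 by (simp add: algebra_simps)
  have b: "(i + H div sH) * sH + q = (i * sH + q) + H" for i using e1 by (simp add: algebra_simps)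
  have c: "(i + W div sW) * sW + r = (i * sW + r) + W" for i using e1 by (simp add: algebra_simps)
  show ?thesis unfolding periodic3_def coarse3_def polyphase_def k
    by (simp add: a b c P)
qed

lemma polyphase_shift:
  "polyphase (sD, sH, sW) (shift3 (a, b, c) X) (p, q, r)
   = shift3 (- ((p - a) div sD), - ((q - b) div sH), - ((r - c) div sW))
       (polyphase (sD, sH, sW) X ((p - a) mod sD, (q - b) mod sH, (r - c) mod sW))"
proof -
  have e: "i * s + x - a = (i - - ((x - a) div s)) * s + (x - a) mod s" for i s x a :: int
  proof -
    have h: "(x - a) div s * s + (x - a) mod s = x - a" by (rule div_mult_mod_eq)
    have "(i - - ((x - a) div s)) * s = i * s + (x - a) div s * s" by (simp add: algebra_simps)
    then show ?thesis using h by linarith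
  qed
  show ?thesis
  proof (rule ext)
    fix x :: idx3
    obtain i j l where x: "x = (i, j, l)" by (cases x) auto
    show "polyphase (sD, sH, sW) (shift3 (a, b, c) X) (p, q, r) x
      = shift3 (- ((p - a) div sD), - ((q - b) div sH), - ((r - c) div sW))
       (polyphase (sD, sH, sW) X ((p - a) mod sD, (q - b) mod sH, (r - c) mod sW)) x"
      unfolding x polyphase_def shift3_def prod.case by (simp only: e)
  qed
qed

lemma exp_div_le_iff: "(Z::real) > 0 \<Longrightarrow> (exp x / Z \<le> exp y / Z) \<longleftrightarrow> x \<le> y"
  by (simp add: divide_le_cancel)

lemma argmax_score:
  assumes "sD > 0" "sH > 0" "sW > 0"
  shows "is_argmax_phase ft N (sD, sH, sW) Y k \<longleftrightarrow>
     k \<in> grid3 (sD, sH, sW) \<and> (\<forall>k'\<in>grid3 (sD, sH, sW).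
        score ft (coarse3 N (sD, sH, sW)) (polyphase (sD, sH, sW) Y k')
        \<le> score ft (coarse3 N (sD, sH, sW)) (polyphase (sD, sH, sW) Y k))"
proof -
  let ?Z = "\<Sum>k'\<in>grid3 (sD, sH, sW). exp (score ft (coarse3 N (sD, sH, sW)) (polyphase (sD, sH, sW) Y k'))"
  have ne: "(0, 0, 0) \<in> grid3 (sD, sH, sW)" using assms by (simp add: grid3_def)
  have fin: "finite (grid3 (sD, sH, sW))" by (simp add: grid3_def)
  have "?Z > 0" by (rule sum_pos2[OF fin ne]) auto
  then show ?thesis unfolding is_argmax_phase_def selprob_def
    using exp_div_le_iff by auto
qed

theorem mainTheorem3:
  fixes D H W sD sH sW :: int
    and ft :: "(real ^ 'c) vol \<Rightarrow> real vol"
    and X :: "(real ^ 'c) vol"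
    and g :: idx3
  assumes pos: "D > 0" "H > 0" "W > 0" "sD > 0" "sH > 0" "sW > 0"
    and dvd: "sD dvd D" "sH dvd H" "sW dvd W"
    and X_per: "periodic3 (D, H, W) X"
    and ft_field: "\<And>Y. periodic3 (coarse3 (D, H, W) (sD, sH, sW)) Y \<Longrightarrow>
                     periodic3 (coarse3 (D, H, W) (sD, sH, sW)) (ft Y)"
    and ft_equiv: "\<And>Y c. periodic3 (coarse3 (D, H, W) (sD, sH, sW)) Y \<Longrightarrow>
                     ft (shift3 c Y) = shift3 c (ft Y)"
    and uniq: "\<exists>!k. is_argmax_phase ft (D, H, W) (sD, sH, sW) X k"
  shows "(\<exists>!k. is_argmax_phase ft (D, H, W) (sD, sH, sW) (shift3 g X) k)
       \<and> kstar ft (D, H, W) (sD, sH, sW) (shift3 g X)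
           = perm3 (sD, sH, sW) g (kstar ft (D, H, W) (sD, sH, sW) X)
       \<and> APT ft (D, H, W) (sD, sH, sW) (shift3 g X)
           = shift3 (floordiv3 (sD, sH, sW) g (kstar ft (D, H, W) (sD, sH, sW) X))
               (APT ft (D, H, W) (sD, sH, sW) X)"
  proof -
  obtain a b c where g: "g = (a, b, c)" by (cases g) auto
  define V where "V = coarse3 (D, H, W) (sD, sH, sW)"
  define S where "S = (\<lambda>Y k. score ft V (polyphase (sD, sH, sW) Y k))"
  define \<sigma> where "\<sigma> = (\<lambda>(p::int, q::int, r::int). ((p - a) mod sD, (q - b) mod sH, (r - c) mod sW))"
  have Vp: "V = (D div sD, H div sH, W div sW)" by (simp add: V_def coarse3_def)
  have Vpos: "D div sD > 0" "H div sH > 0" "W div sW > 0"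
    using pos dvd by (auto simp: pos_imp_zdiv_pos_iff zdvd_imp_le)
  have Sshift: "S (shift3 g X) k = S X (\<sigma> k)" for k
  proof -
    obtain p q r where k: "k = (p, q, r)" by (cases k) auto
    let ?Y = "polyphase (sD, sH, sW) X ((p - a) mod sD, (q - b) mod sH, (r - c) mod sW)"
    have Yp: "periodic3 V ?Y" unfolding V_def by (rule polyphase_periodic[OF dvd X_per])
    have "S (shift3 g X) k = score ft V (shift3 (- ((p - a) div sD), - ((q - b) div sH), - ((r - c) div sW)) ?Y)"
      by (simp add: S_def g k polyphase_shift)
    also have "\<dots> = score ft V ?Y"
      unfolding score_def ft_equiv[OF Yp[unfolded V_def], folded V_def]
      using sum_shift3[OF Vpos ft_field[OF Yp[unfolded V_def], folded V_def, unfolded Vp]] Vp by simp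
    finally show ?thesis by (simp add: S_def \<sigma>_def k)
  qed
  have \<sigma>_grid: "\<sigma> k \<in> grid3 (sD, sH, sW)" for k
    using pos by (cases k) (simp add: \<sigma>_def grid3_def)
  have \<sigma>_onto: "k'' \<in> grid3 (sD, sH, sW) \<Longrightarrow> \<exists>k'\<in>grid3 (sD, sH, sW). \<sigma> k' = k''" for k''
  proof -
    assume h: "k'' \<in> grid3 (sD, sH, sW)"
    obtain p q r where k: "k'' = (p, q, r)" by (cases k'') auto
    show ?thesis
      by (rule bexI[where x = "((p + a) mod sD, (q + b) mod sH, (r + c) mod sW)"])
         (use h pos in \<open>auto simp: k \<sigma>_def grid3_def mod_simps\<close>)
  qed
  have AM: "is_argmax_phase ft (D, H, W) (sD, sH, sW) Y k \<longleftrightarrow>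
     k \<in> grid3 (sD, sH, sW) \<and> (\<forall>k'\<in>grid3 (sD, sH, sW). S Y k' \<le> S Y k)" for Y k
    unfolding S_def V_def by (rule argmax_score[OF pos(4-6)])
  have AMs: "is_argmax_phase ft (D, H, W) (sD, sH, sW) (shift3 g X) k \<longleftrightarrow>
     k \<in> grid3 (sD, sH, sW) \<and> is_argmax_phase ft (D, H, W) (sD, sH, sW) X (\<sigma> k)" for k
    unfolding AM Sshift using \<sigma>_grid \<sigma>_onto by metis
  define k0 where "k0 = kstar ft (D, H, W) (sD, sH, sW) X"
  have k0: "is_argmax_phase ft (D, H, W) (sD, sH, sW) X k0"
    unfolding k0_def kstar_def using uniq by (rule theI')
  have k0u: "is_argmax_phase ft (D, H, W) (sD, sH, sW) X k \<Longrightarrow> k = k0" for k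
    using uniq k0 by blast
  obtain p0 q0 r0 where k0p: "k0 = (p0, q0, r0)" by (cases k0) auto
  have k0g: "k0 \<in> grid3 (sD, sH, sW)" using k0 by (simp add: is_argmax_phase_def)
  then have r: "0 \<le> p0" "p0 < sD" "0 \<le> q0" "q0 < sH" "0 \<le> r0" "r0 < sW"
    by (auto simp: k0p grid3_def)
  define k1 where "k1 = perm3 (sD, sH, sW) g k0"
  have k1p: "k1 = ((p0 + a) mod sD, (q0 + b) mod sH, (r0 + c) mod sW)"
    by (simp add: k1_def perm3_def g k0p)
  have iff: "is_argmax_phase ft (D, H, W) (sD, sH, sW) (shift3 g X) k \<longleftrightarrow> k = k1" for k
  proof -
    obtain p q r where k: "k = (p, q, r)" by (cases k) auto
    have "is_argmax_phase ft (D, H, W) (sD, sH, sW) (shift3 g X) k \<longleftrightarrow>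
          k \<in> grid3 (sD, sH, sW) \<and> \<sigma> k = k0"
      unfolding AMs using k0 k0u by blast
    also have "\<dots> \<longleftrightarrow> k = k1"
      using mod_eq_iff[OF r(1,2), of p a] mod_eq_iff[OF r(3,4), of q b] mod_eq_iff[OF r(5,6), of r c]
      by (auto simp: k k1p k0p \<sigma>_def grid3_def)
    finally show ?thesis .
  qed
  have U: "\<exists>!k. is_argmax_phase ft (D, H, W) (sD, sH, sW) (shift3 g X) k"
    by (rule ex1I[of _ k1]) (auto simp: iff)
  have KS: "kstar ft (D, H, W) (sD, sH, sW) (shift3 g X) = k1"
    unfolding kstar_def by (rule the_equality) (auto simp: iff)
  have APTeq: "APT ft (D, H, W) (sD, sH, sW) (shift3 g X)
      = shift3 (floordiv3 (sD, sH, sW) g k0) (APT ft (D, H, W) (sD, sH, sW) X)"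
  proof -
    have m: "((p0 + a) mod sD - a) mod sD = p0" "((q0 + b) mod sH - b) mod sH = q0"
      "((r0 + c) mod sW - c) mod sW = r0"
      using r by (simp_all add: mod_diff_left_eq)
    have "APT ft (D, H, W) (sD, sH, sW) (shift3 g X)
        = polyphase (sD, sH, sW) (shift3 (a, b, c) X) ((p0 + a) mod sD, (q0 + b) mod sH, (r0 + c) mod sW)"
      by (simp only: APT_def KS[unfolded g] k1p g)
    also have "\<dots> = shift3 (- (((p0 + a) mod sD - a) div sD), - (((q0 + b) mod sH - b) div sH),
          - (((r0 + c) mod sW - c) div sW))
        (polyphase (sD, sH, sW) X (((p0 + a) mod sD - a) mod sD, ((q0 + b) mod sH - b) mod sH,
          ((r0 + c) mod sW - c) mod sW))"
      by (rule polyphase_shift)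
    also have "\<dots> = shift3 ((p0 + a) div sD, (q0 + b) div sH, (r0 + c) div sW)
        (polyphase (sD, sH, sW) X (p0, q0, r0))"
      by (simp only: m mod_back[OF r(1,2)] mod_back[OF r(3,4)] mod_back[OF r(5,6)] minus_minus)
    also have "\<dots> = shift3 (floordiv3 (sD, sH, sW) g k0) (APT ft (D, H, W) (sD, sH, sW) X)"
      by (simp only: APT_def floordiv3_def g k0p prod.case k0_def[symmetric])
    finally show ?thesis .
  qed
  show ?thesis unfolding k0_def[symmetric]
  proof (intro conjI)
    show "\<exists>!k. is_argmax_phase ft (D, H, W) (sD, sH, sW) (shift3 g X) k" by (rule U)
    show "kstar ft (D, H, W) (sD, sH, sW) (shift3 g X) = perm3 (sD, sH, sW) g k0"
      by (simp only: KS k1_def)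
    show "APT ft (D, H, W) (sD, sH, sW) (shift3 g X)
      = shift3 (floordiv3 (sD, sH, sW) g k0) (APT ft (D, H, W) (sD, sH, sW) X)" by (rule APTeq)
  qed
qed

end
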